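(* Let $S$ be a quasi-adequate semigroup with an admissible adequate transversal $S^0$. Then for all $x,y\in S$, $\overline{xy}=\overline{\overline{x}f_xe_y\overline{y}}$.
   Context: For a semigroup $S$, $S^1$ is $S$ with an identity adjoined, $\mathcal{L},\mathcal{R}$ Green's relations. $\mathcal{R}^\ast=\{(a,b):\forall x,y\in S^1,\ xa=ya\iff xb=yb\}$, $\mathcal{L}^\ast=\{(a,b):\forall x,y\in S^1,\ ax=ay\iff bx=by\}$. $S$ is abundant if each $\mathcal{R}^\ast$- and $\mathcal{L}^\ast$-class contains an idempotent; adequate if also idempotents commute (then $a^+$, $a^\ast$ are the unique idempotents $\mathcal{R}^\ast$-, resp. $\mathcal{L}^\ast$-related to $a$). Quasi-adequate: abundant with idempotents forming a subsemigroup. An abundant subsemigroup $U$ of abundant $S$ is a $\ast$-subsemigroup if $\mathcal{L}^\ast(U)=\mathcal{L}^\ast(S)\cap(U\times U)$, $\mathcal{R}^\ast(U)=\mathcal{R}^\ast(S)\cap(U\times U)$. An adequate $\ast$-subsemigroup $S^0$ of abundant $S$ is an adequate transversal if each $x\in S$ has a unique $\overline{x}\in S^0$ and idempotents $e,f$ of $S$ (then unique, written $e_x,f_x$) with $x=e\overline{x}f$, $e\,\mathcal{L}\,\overline{x}^+$, $f\,\mathcal{R}\,\overline{x}^\ast$. It is admissible if $\overline{xy}=\overline{x}\,\overline{y}$ for all $x,y\in S$. *)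

theory Defs
  imports Main
begin

text \<open>The semigroup S is the whole type 'a (class semigroup_mult). Subsemigroups are
  carrier sets U. Elements of U^1 are represented as 'a option, None being the
  adjoined identity.\<close>

definition ones :: "'a set \<Rightarrow> 'a option set" where
  "ones U = insert None (Some ` U)"

fun lmul1 :: "'a::semigroup_mult option \<Rightarrow> 'a \<Rightarrow> 'a" where
  "lmul1 None a = a"
| "lmul1 (Some x) a = x * a"

fun rmul1 :: "'a::semigroup_mult \<Rightarrow> 'a option \<Rightarrow> 'a" where
  "rmul1 a None = a"
| "rmul1 a (Some x) = a * x"

definition idem :: "'a::semigroup_mult \<Rightarrow> bool" where
  "idem e \<longleftrightarrow> e * e = e"

definition subsemigroup :: "'a::semigroup_mult set \<Rightarrow> bool" where
  "subsemigroup U \<longleftrightarrow> (\<forall>a\<in>U. \<forall>b\<in>U. a * b \<in> U)"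

definition greenL :: "'a::semigroup_mult set \<Rightarrow> 'a \<Rightarrow> 'a \<Rightarrow> bool" where
  "greenL U a b \<longleftrightarrow> a \<in> U \<and> b \<in> U \<and>
     (\<exists>x\<in>ones U. lmul1 x a = b) \<and> (\<exists>y\<in>ones U. lmul1 y b = a)"

definition greenR :: "'a::semigroup_mult set \<Rightarrow> 'a \<Rightarrow> 'a \<Rightarrow> bool" where
  "greenR U a b \<longleftrightarrow> a \<in> U \<and> b \<in> U \<and>
     (\<exists>x\<in>ones U. rmul1 a x = b) \<and> (\<exists>y\<in>ones U. rmul1 b y = a)"

definition rstar :: "'a::semigroup_mult set \<Rightarrow> 'a \<Rightarrow> 'a \<Rightarrow> bool" where
  "rstar U a b \<longleftrightarrow> a \<in> U \<and> b \<in> U \<and>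
     (\<forall>x\<in>ones U. \<forall>y\<in>ones U. lmul1 x a = lmul1 y a \<longleftrightarrow> lmul1 x b = lmul1 y b)"

definition lstar :: "'a::semigroup_mult set \<Rightarrow> 'a \<Rightarrow> 'a \<Rightarrow> bool" where
  "lstar U a b \<longleftrightarrow> a \<in> U \<and> b \<in> U \<and>
     (\<forall>x\<in>ones U. \<forall>y\<in>ones U. rmul1 a x = rmul1 a y \<longleftrightarrow> rmul1 b x = rmul1 b y)"

definition abundant :: "'a::semigroup_mult set \<Rightarrow> bool" where
  "abundant U \<longleftrightarrow> subsemigroup U \<and>
     (\<forall>a\<in>U. \<exists>e\<in>U. idem e \<and> rstar U a e) \<and>
     (\<forall>a\<in>U. \<exists>e\<in>U. idem e \<and> lstar U a e)"

definition adequate :: "'a::semigroup_mult set \<Rightarrow> bool" where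
  "adequate U \<longleftrightarrow> abundant U \<and>
     (\<forall>e\<in>U. \<forall>f\<in>U. idem e \<and> idem f \<longrightarrow> e * f = f * e)"

definition quasi_adequate :: "'a::semigroup_mult set \<Rightarrow> bool" where
  "quasi_adequate U \<longleftrightarrow> abundant U \<and>
     (\<forall>e\<in>U. \<forall>f\<in>U. idem e \<and> idem f \<longrightarrow> idem (e * f))"

definition aplus :: "'a::semigroup_mult set \<Rightarrow> 'a \<Rightarrow> 'a" where
  "aplus U a = (THE e. e \<in> U \<and> idem e \<and> rstar U a e)"

definition astar :: "'a::semigroup_mult set \<Rightarrow> 'a \<Rightarrow> 'a" where
  "astar U a = (THE e. e \<in> U \<and> idem e \<and> lstar U a e)"

definition star_subsemigroup :: "'a::semigroup_mult set \<Rightarrow> 'a set \<Rightarrow> bool" where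
  "star_subsemigroup S U \<longleftrightarrow> U \<subseteq> S \<and> abundant U \<and>
     (\<forall>a\<in>U. \<forall>b\<in>U. lstar U a b \<longleftrightarrow> lstar S a b) \<and>
     (\<forall>a\<in>U. \<forall>b\<in>U. rstar U a b \<longleftrightarrow> rstar S a b)"

definition decomp :: "'a::semigroup_mult set \<Rightarrow> 'a \<Rightarrow> 'a \<Rightarrow> 'a \<Rightarrow> 'a \<Rightarrow> bool" where
  "decomp S0 x t e f \<longleftrightarrow> t \<in> S0 \<and> idem e \<and> idem f \<and> x = e * t * f \<and>
     greenL UNIV e (aplus S0 t) \<and> greenR UNIV f (astar S0 t)"

definition adequate_transversal :: "'a::semigroup_mult set \<Rightarrow> bool" where
  "adequate_transversal S0 \<longleftrightarrow> abundant (UNIV :: 'a set) \<and> adequate S0 \<and>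
     star_subsemigroup UNIV S0 \<and>
     (\<forall>x. \<exists>!t. \<exists>e f. decomp S0 x t e f)"

definition bar :: "'a::semigroup_mult set \<Rightarrow> 'a \<Rightarrow> 'a" where
  "bar S0 x = (THE t. \<exists>e f. decomp S0 x t e f)"

definition e_of :: "'a::semigroup_mult set \<Rightarrow> 'a \<Rightarrow> 'a" where
  "e_of S0 x = (THE e. \<exists>f. decomp S0 x (bar S0 x) e f)"

definition f_of :: "'a::semigroup_mult set \<Rightarrow> 'a \<Rightarrow> 'a" where
  "f_of S0 x = (THE f. \<exists>e. decomp S0 x (bar S0 x) e f)"

definition admissible :: "'a::semigroup_mult set \<Rightarrow> bool" where
  "admissible S0 \<longleftrightarrow> (\<forall>x y. bar S0 (x * y) = bar S0 x * bar S0 y)"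

end

theory Submission
  imports Defs
begin

lemma lmul1_assoc: "lmul1 u (a::'a::semigroup_mult) * b = lmul1 u (a*b)"
  by (cases u) (simp_all add: mult.assoc)
lemma rmul1_assoc: "(a::'a::semigroup_mult) * rmul1 b u = rmul1 (a*b) u"
  by (cases u) (simp_all add: mult.assoc)

lemma rstarD: "rstar U a b \<Longrightarrow> x \<in> U \<Longrightarrow> (x*a = a) = (x*b = b)"
  unfolding rstar_def ones_def by (metis image_eqI insertCI lmul1.simps)
lemma lstarD: "lstar U a b \<Longrightarrow> x \<in> U \<Longrightarrow> (a*x = a) = (b*x = b)"
  unfolding lstar_def ones_def by (metis image_eqI insertCI rmul1.simps)
lemma rstar_sym: "rstar U a b \<Longrightarrow> rstar U b a"
  unfolding rstar_def by blast
lemma rstar_trans: "rstar U a b \<Longrightarrow> rstar U b c \<Longrightarrow> rstar U a c"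
  unfolding rstar_def by blast
lemma lstar_sym: "lstar U a b \<Longrightarrow> lstar U b a"
  unfolding lstar_def by blast
lemma lstar_trans: "lstar U a b \<Longrightarrow> lstar U b c \<Longrightarrow> lstar U a c"
  unfolding lstar_def by blast

lemma rstar_lcomp: "rstar UNIV a b \<Longrightarrow> rstar UNIV (c*a) (c*(b::'a::semigroup_mult))"
  unfolding rstar_def ones_def
proof (intro conjI ballI, simp, simp)
  fix x y :: "'a option"
  assume h: "a \<in> UNIV \<and> b \<in> UNIV \<and> (\<forall>x\<in>insert None (range Some). \<forall>y\<in>insert None (range Some). (lmul1 x a = lmul1 y a) = (lmul1 x b = lmul1 y b))"
  have "(lmul1 (Some (lmul1 x c)) a = lmul1 (Some (lmul1 y c)) a) = (lmul1 (Some (lmul1 x c)) b = lmul1 (Some (lmul1 y c)) b)"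
    using h by blast
  then show "(lmul1 x (c * a) = lmul1 y (c * a)) = (lmul1 x (c * b) = lmul1 y (c * b))"
    by (simp add: lmul1_assoc)
qed

lemma lstar_rcomp: "lstar UNIV a b \<Longrightarrow> lstar UNIV (a*c) ((b::'a::semigroup_mult)*c)"
  unfolding lstar_def ones_def
proof (intro conjI ballI, simp, simp)
  fix x y :: "'a option"
  assume h: "a \<in> UNIV \<and> b \<in> UNIV \<and> (\<forall>x\<in>insert None (range Some). \<forall>y\<in>insert None (range Some). (rmul1 a x = rmul1 a y) = (rmul1 b x = rmul1 b y))"
  have "(rmul1 a (Some (rmul1 c x)) = rmul1 a (Some (rmul1 c y))) = (rmul1 b (Some (rmul1 c x)) = rmul1 b (Some (rmul1 c y)))"
    using h by blast
  then show "(rmul1 (a * c) x = rmul1 (a * c) y) = (rmul1 (b * c) x = rmul1 (b * c) y)"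
    by (simp add: rmul1_assoc)
qed

lemma rstar_R: "a = b*u \<Longrightarrow> b = a*v \<Longrightarrow> rstar UNIV a (b::'a::semigroup_mult)"
  unfolding rstar_def
proof (intro conjI ballI, simp, simp)
  fix x y assume "a = b*u" "b = a*v"
  show "(lmul1 x a = lmul1 y a) = (lmul1 x b = lmul1 y b)"
  proof
    assume "lmul1 x a = lmul1 y a"
    then have "lmul1 x a * v = lmul1 y a * v" by simp
    then show "lmul1 x b = lmul1 y b" using \<open>b = a*v\<close> by (simp add: lmul1_assoc)
  next
    assume "lmul1 x b = lmul1 y b"
    then have "lmul1 x b * u = lmul1 y b * u" by simp
    then show "lmul1 x a = lmul1 y a" using \<open>a = b*u\<close> by (simp add: lmul1_assoc)
  qed
qed

lemma lr_assoc: "lmul1 v (rmul1 (a::'a::semigroup_mult) x) = rmul1 (lmul1 v a) x"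
  by (cases v; cases x) (simp_all add: mult.assoc)

lemma lstar_L: "a = lmul1 u b \<Longrightarrow> b = lmul1 v a \<Longrightarrow> lstar UNIV a (b::'a::semigroup_mult)"
  unfolding lstar_def
proof (intro conjI ballI, simp, simp)
  fix x y assume "a = lmul1 u b" "b = lmul1 v a"
  show "(rmul1 a x = rmul1 a y) = (rmul1 b x = rmul1 b y)"
  proof
    assume "rmul1 a x = rmul1 a y"
    then have "lmul1 v (rmul1 a x) = lmul1 v (rmul1 a y)" by simp
    then show "rmul1 b x = rmul1 b y" using \<open>b = lmul1 v a\<close>
      by (simp add: lr_assoc)
  next
    assume "rmul1 b x = rmul1 b y"
    then have "lmul1 u (rmul1 b x) = lmul1 u (rmul1 b y)" by simp
    then show "rmul1 a x = rmul1 a y" using \<open>a = lmul1 u b\<close>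
      by (simp add: lr_assoc)
  qed
qed


lemma aplus_prop:
  assumes ad: "adequate S0" and a: "a \<in> S0"
  shows "aplus S0 a \<in> S0 \<and> idem (aplus S0 a) \<and> rstar S0 a (aplus S0 a)"
proof -
  from ad a obtain e where e: "e \<in> S0" "idem e" "rstar S0 a e"
    unfolding adequate_def abundant_def by blast
  have "\<And>e'. e' \<in> S0 \<and> idem e' \<and> rstar S0 a e' \<Longrightarrow> e' = e"
  proof -
    fix e' assume h: "e' \<in> S0 \<and> idem e' \<and> rstar S0 a e'"
    have r: "rstar S0 e e'" using rstar_trans[OF rstar_sym[OF e(3)]] h by blast
    have 1: "e * e' = e'" using rstarD[OF r, of e] e h by (simp add: idem_def)
    have 2: "e' * e = e" using rstarD[OF rstar_sym[OF r], of e'] e h by (simp add: idem_def)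
    have "e * e' = e' * e" using ad e h unfolding adequate_def by blast
    then show "e' = e" using 1 2 by simp
  qed
  then have "aplus S0 a = e" unfolding aplus_def using e by (intro the_equality) blast+
  then show ?thesis using e by simp
qed

lemma astar_prop:
  assumes ad: "adequate S0" and a: "a \<in> S0"
  shows "astar S0 a \<in> S0 \<and> idem (astar S0 a) \<and> lstar S0 a (astar S0 a)"
proof -
  from ad a obtain e where e: "e \<in> S0" "idem e" "lstar S0 a e"
    unfolding adequate_def abundant_def by blast
  have "\<And>e'. e' \<in> S0 \<and> idem e' \<and> lstar S0 a e' \<Longrightarrow> e' = e"
  proof -
    fix e' assume h: "e' \<in> S0 \<and> idem e' \<and> lstar S0 a e'"
    have r: "lstar S0 e e'" using lstar_trans[OF lstar_sym[OF e(3)]] h by blast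
    have 1: "e' * e = e'" using lstarD[OF r, of e] e h by (simp add: idem_def)
    have 2: "e * e' = e" using lstarD[OF lstar_sym[OF r], of e'] e h by (simp add: idem_def)
    have "e * e' = e' * e" using ad e h unfolding adequate_def by blast
    then show "e' = e" using 1 2 by simp
  qed
  then have "astar S0 a = e" unfolding astar_def using e by (intro the_equality) blast+
  then show ?thesis using e by simp
qed

lemma aplus_mul: "adequate S0 \<Longrightarrow> a \<in> S0 \<Longrightarrow> aplus S0 a * a = a"
  using aplus_prop[of S0 a] rstarD[of S0 a "aplus S0 a" "aplus S0 a"] by (simp add: idem_def)

lemma astar_mul: "adequate S0 \<Longrightarrow> a \<in> S0 \<Longrightarrow> a * astar S0 a = a"
  using astar_prop[of S0 a] lstarD[of S0 a "astar S0 a" "astar S0 a"] by (simp add: idem_def)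

lemma greenL_refl: "greenL UNIV a a"
  unfolding greenL_def ones_def by (metis UNIV_I insertI1 lmul1.simps(1))
lemma greenR_refl: "greenR UNIV a a"
  unfolding greenR_def ones_def by (metis UNIV_I insertI1 rmul1.simps(1))

lemma greenL_idem:
  assumes "greenL UNIV e p" "idem e" "idem (p::'a::semigroup_mult)"
  shows "e * p = e \<and> p * e = p"
proof -
  obtain u v where u: "lmul1 u e = p" and v: "lmul1 v p = e" using assms(1) unfolding greenL_def by blast
  have "e * p = lmul1 v (p * p)" using v by (simp add: lmul1_assoc[symmetric])
  moreover have "p * e = lmul1 u (e * e)" using u by (simp add: lmul1_assoc[symmetric])
  ultimately show ?thesis using assms u v by (simp add: idem_def)
qed

lemma greenR_idem:
  assumes "greenR UNIV f q" "idem f" "idem (q::'a::semigroup_mult)"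
  shows "q * f = f \<and> f * q = q"
proof -
  obtain u v where u: "rmul1 f u = q" and v: "rmul1 q v = f" using assms(1) unfolding greenR_def by blast
  have "q * f = rmul1 (q * q) v" using v[symmetric] rmul1_assoc[of q q v] by simp
  moreover have "f * q = rmul1 (f * f) u" using u[symmetric] rmul1_assoc[of f f u] by simp
  ultimately show ?thesis using assms u v by (simp add: idem_def)
qed

lemma decomp_S0:
  assumes "adequate S0" "t \<in> S0"
  shows "decomp S0 t t (aplus S0 t) (astar S0 t)"
  using assms aplus_prop[OF assms] astar_prop[OF assms] aplus_mul[OF assms] astar_mul[OF assms]
  unfolding decomp_def by (simp add: greenL_refl greenR_refl mult.assoc)

lemma bar_eq:
  assumes "adequate_transversal S0" "decomp S0 x t e f"
  shows "bar S0 x = t"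
proof -
  have "\<exists>!t. \<exists>e f. decomp S0 x t e f" using assms(1) unfolding adequate_transversal_def by blast
  from the1_equality[OF this] assms(2) show ?thesis unfolding bar_def by blast
qed

lemma bar_dec:
  assumes "adequate_transversal S0"
  shows "\<exists>e f. decomp S0 x (bar S0 x) e f"
proof -
  have "\<exists>!t. \<exists>e f. decomp S0 x t e f" using assms(1) unfolding adequate_transversal_def by blast
  then show ?thesis unfolding bar_def by (rule theI')
qed

lemma bar_S0: "adequate_transversal S0 \<Longrightarrow> t \<in> S0 \<Longrightarrow> bar S0 t = t"
  using bar_eq decomp_S0 unfolding adequate_transversal_def by blast

lemma star_U:
  assumes "adequate_transversal S0" "t \<in> S0"
  shows "rstar UNIV t (aplus S0 t) \<and> lstar UNIV t (astar S0 t)"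
proof -
  have ad: "adequate S0" and st: "star_subsemigroup UNIV S0" using assms unfolding adequate_transversal_def by auto
  show ?thesis using st aplus_prop[OF ad assms(2)] astar_prop[OF ad assms(2)] assms(2)
    unfolding star_subsemigroup_def by blast
qed

lemma decomp_uniq:
  assumes at: "adequate_transversal S0" and d1: "decomp S0 x t e f" and d2: "decomp S0 x t e' f'"
  shows "e = e' \<and> f = f'"
proof -
  have ad: "adequate S0" using at unfolding adequate_transversal_def by auto
  define p where "p = aplus S0 t"
  define q where "q = astar S0 t"
  have tS: "t \<in> S0" using d1 unfolding decomp_def by auto
  have pi: "idem p" "idem q" using aplus_prop[OF ad tS] astar_prop[OF ad tS] p_def q_def by auto
  have pt: "p * t = t" "t * q = t" using aplus_mul[OF ad tS] astar_mul[OF ad tS] p_def q_def by auto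
  have rs: "rstar UNIV t p" "lstar UNIV t q" using star_U[OF at tS] p_def q_def by auto
  have gen: "e * p = e \<and> p * e = p \<and> q * f = f \<and> f * q = q \<and> rstar UNIV x e \<and> lstar UNIV x f"
    if d: "decomp S0 x t e f" for e f
  proof -
    have ie: "idem e" "idem f" "x = e * t * f" using d unfolding decomp_def by auto
    have g: "greenL UNIV e p" "greenR UNIV f q" using d unfolding decomp_def p_def q_def by auto
    have ep: "e * p = e" "p * e = p" using greenL_idem[OF g(1) ie(1) pi(1)] by auto
    have fq: "q * f = f" "f * q = q" using greenR_idem[OF g(2) ie(2) pi(2)] by auto
    have "x * q = e * t" using ie fq pt by (simp add: mult.assoc)
    then have r1: "rstar UNIV x (e * t)" using ie by (intro rstar_R[where u=f and v=q]) (auto simp: mult.assoc)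
    have r2: "rstar UNIV (e * t) e" using rstar_lcomp[OF rs(1), of e] ep by simp
    obtain u where u: "lmul1 u e = p" using g(1) unfolding greenL_def by blast
    have "t * f = p * t * f" using pt by simp
    also have "\<dots> = lmul1 u e * t * f" using u by simp
    also have "\<dots> = lmul1 u x" using ie by (simp add: lmul1_assoc mult.assoc)
    finally have "t * f = lmul1 u x" .
    then have l1: "lstar UNIV x (t * f)" using ie
      by (intro lstar_L[where v=u and u="Some e"]) (auto simp: mult.assoc)
    have l2: "lstar UNIV (t * f) f" using lstar_rcomp[OF rs(2), of f] fq by simp
    show ?thesis using ep fq rstar_trans[OF r1 r2] lstar_trans[OF l1 l2] by blast
  qed
  note g1 = gen[OF d1] and g2 = gen[OF d2]
  have ie: "idem e" "idem e'" "idem f" "idem f'" using d1 d2 unfolding decomp_def by auto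
  have r: "rstar UNIV e e'" using rstar_trans[OF rstar_sym[of UNIV x e] , of e'] g1 g2 by blast
  have "e * e' = e'" using rstarD[OF r, of e] ie by (simp add: idem_def)
  moreover have "e * e' = e"
  proof -
    have "e * e' = e * p * e'" using g1 by simp
    also have "\<dots> = e * p" using g2 by (simp add: mult.assoc)
    finally show ?thesis using g1 by simp
  qed
  ultimately have "e = e'" by simp
  have l: "lstar UNIV f f'" using lstar_trans[OF lstar_sym[of UNIV x f] , of f'] g1 g2 by blast
  have "f' * f = f'" using lstarD[OF l, of f] ie by (simp add: idem_def)
  moreover have "f' * f = f"
  proof -
    have "f' * f = f' * (q * f)" using g1 by simp
    also have "\<dots> = q * f" using g2 by (simp add: mult.assoc[symmetric])
    finally show ?thesis using g1 by simp
  qed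
  ultimately have "f = f'" by simp
  with \<open>e = e'\<close> show ?thesis by simp
qed


lemma e_of_dec:
  assumes at: "adequate_transversal S0"
  shows "\<exists>f. decomp S0 x (bar S0 x) (e_of S0 x) f"
proof -
  obtain e f where d: "decomp S0 x (bar S0 x) e f" using bar_dec[OF at] by blast
  have "e_of S0 x = e" unfolding e_of_def
    by (rule the_equality) (use d decomp_uniq[OF at] in blast)+
  then show ?thesis using d by blast
qed

lemma f_of_dec:
  assumes at: "adequate_transversal S0"
  shows "\<exists>e. decomp S0 x (bar S0 x) e (f_of S0 x)"
proof -
  obtain e f where d: "decomp S0 x (bar S0 x) e f" using bar_dec[OF at] by blast
  have "f_of S0 x = f" unfolding f_of_def
    by (rule the_equality) (use d decomp_uniq[OF at] in blast)+
  then show ?thesis using d by blast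
qed

lemma bar_in: "adequate_transversal S0 \<Longrightarrow> bar S0 x \<in> S0"
  using bar_dec[of S0 x] unfolding decomp_def by blast

lemma bar_ef:
  assumes at: "adequate_transversal S0" and adm: "admissible S0" and d: "decomp S0 x t e f"
  shows "bar S0 e = aplus S0 t \<and> bar S0 f = astar S0 t"
proof -
  have ad: "adequate S0" using at unfolding adequate_transversal_def by auto
  have com: "\<forall>e\<in>S0. \<forall>f\<in>S0. idem e \<and> idem f \<longrightarrow> e * f = f * e" using ad unfolding adequate_def by simp
  have bm: "\<And>a b. bar S0 (a * b) = bar S0 a * bar S0 b" using adm unfolding admissible_def by blast
  define p where "p = aplus S0 t"
  define q where "q = astar S0 t"
  have tS: "t \<in> S0" using d unfolding decomp_def by auto
  have pS: "p \<in> S0" "q \<in> S0" "idem p" "idem q" using aplus_prop[OF ad tS] astar_prop[OF ad tS] p_def q_def by auto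
  have ie: "idem e" "idem f" using d unfolding decomp_def by auto
  have g: "greenL UNIV e p" "greenR UNIV f q" using d unfolding decomp_def p_def q_def by auto
  have ep: "e * p = e" "p * e = p" using greenL_idem[OF g(1) ie(1) pS(3)] by auto
  have fq: "q * f = f" "f * q = q" using greenR_idem[OF g(2) ie(2) pS(4)] by auto
  have bp: "bar S0 p = p" "bar S0 q = q" using bar_S0[OF at] pS by auto
  have be: "idem (bar S0 e)" "idem (bar S0 f)" using ie bm unfolding idem_def by metis+
  have bS: "bar S0 e \<in> S0" "bar S0 f \<in> S0" using bar_in[OF at] by auto
  have 1: "bar S0 e = bar S0 e * p" using bm[of e p] ep bp by simp
  have 2: "p = p * bar S0 e" using bm[of p e] ep bp by simp
  have 3: "bar S0 e * p = p * bar S0 e" using com bS pS be by blast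
  have 4: "bar S0 f = q * bar S0 f" using bm[of q f] fq bp by simp
  have 5: "q = bar S0 f * q" using bm[of f q] fq bp by simp
  have 6: "bar S0 f * q = q * bar S0 f" using com bS pS be by blast
  show ?thesis using 1 2 3 4 5 6 p_def q_def by simp
qed

theorem lemma2p12:
  fixes S0 :: "'a::semigroup_mult set"
  assumes "quasi_adequate (UNIV :: 'a set)"
    and "adequate_transversal S0"
    and "admissible S0"
  shows "\<forall>x y. bar S0 (x * y) = bar S0 (bar S0 x * f_of S0 x * e_of S0 y * bar S0 y)"
proof (intro allI)
  fix x y
  note at = assms(2)
  have ad: "adequate S0" using at unfolding adequate_transversal_def by auto
  have bm: "\<And>a b. bar S0 (a * b) = bar S0 a * bar S0 b" using assms(3) unfolding admissible_def by blast
  obtain e1 where d1: "decomp S0 x (bar S0 x) e1 (f_of S0 x)" using f_of_dec[OF at] by blast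
  obtain f2 where d2: "decomp S0 y (bar S0 y) (e_of S0 y) f2" using e_of_dec[OF at] by blast
  have bf: "bar S0 (f_of S0 x) = astar S0 (bar S0 x)" using bar_ef[OF at assms(3) d1] by simp
  have be: "bar S0 (e_of S0 y) = aplus S0 (bar S0 y)" using bar_ef[OF at assms(3) d2] by simp
  have xS: "bar S0 x \<in> S0" "bar S0 y \<in> S0" using bar_in[OF at] by auto
  have bb: "bar S0 (bar S0 x) = bar S0 x" "bar S0 (bar S0 y) = bar S0 y" using bar_S0[OF at] xS by auto
  have "bar S0 (bar S0 x * f_of S0 x * e_of S0 y * bar S0 y)
      = bar S0 x * astar S0 (bar S0 x) * (aplus S0 (bar S0 y) * bar S0 y)"
    using bm bf be bb by (simp add: mult.assoc)
  also have "\<dots> = bar S0 x * bar S0 y" using astar_mul[OF ad xS(1)] aplus_mul[OF ad xS(2)] by simp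
  finally show "bar S0 (x * y) = bar S0 (bar S0 x * f_of S0 x * e_of S0 y * bar S0 y)"
    using bm by simp
qed

end
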